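(* For every integer $k\ge 1$, $k$ is a local minimum of the negligibility sequence $(p(m))_{m\ge 0}$ if and only if $k$ is a local minimum of the rank sequence $(r(m))_{m\ge0}$.
   Context: Every integer $m\ge 0$ is written in binary as $m=\sum_{k\ge1} m_k 2^{k-1}$ with $m_k\in\{0,1\}$. The rank is $r(m)=\sum_k m_k$ and the negligibility is $p(m)=\sum_k (k+1)m_k$. For a real sequence $(a_m)_{m\ge0}$, an index $k\ge1$ is a local minimum if $a_{k-1}>a_k<a_{k+1}$ (strict inequalities). *)

theory Defs
  imports Complex_Main
begin

text \<open>Binary digit m_k (k >= 1): m = sum_k m_k 2^(k-1).\<close>
definition bdigit :: "nat \<Rightarrow> nat \<Rightarrow> nat" where
  "bdigit m k = (m div 2 ^ (k - 1)) mod 2"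

text \<open>Rank r(m) = sum_{k>=1} m_k (only finitely many nonzero digits).\<close>
definition rank :: "nat \<Rightarrow> nat" where
  "rank m = (\<Sum>k\<in>{k. 1 \<le> k \<and> bdigit m k \<noteq> 0}. bdigit m k)"

definition negl :: "nat \<Rightarrow> nat" where
  "negl m = (\<Sum>k\<in>{k. 1 \<le> k \<and> bdigit m k \<noteq> 0}. (k + 1) * bdigit m k)"

definition local_min :: "(nat \<Rightarrow> real) \<Rightarrow> nat \<Rightarrow> bool" where
  "local_min a k \<longleftrightarrow> 1 \<le> k \<and> a (k - 1) > a k \<and> a k < a (k + 1)"

end

theory Submission
  imports Defs
begin

definition S :: "nat \<Rightarrow> nat set" where
  "S m = {k. 1 \<le> k \<and> bdigit m k \<noteq> 0}"

lemma bdigit_one: "bdigit m k \<noteq> 0 \<longleftrightarrow> bdigit m k = 1"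
  unfolding bdigit_def by auto

lemma kle: "1 \<le> k \<Longrightarrow> k \<le> (2::nat) ^ (k - 1)"
proof (induction k)
  case (Suc k) thus ?case by (cases k) auto
qed simp

lemma S_fin: "finite (S m)"
proof -
  have "S m \<subseteq> {1..m}"
  proof
    fix k assume "k \<in> S m"
    hence k: "1 \<le> k" "(m div 2 ^ (k - 1)) mod 2 \<noteq> 0" by (auto simp: S_def bdigit_def)
    hence "m div 2 ^ (k - 1) \<noteq> 0" by auto
    hence "2 ^ (k - 1) \<le> m" by (simp add: div_eq_0_iff)
    moreover have "k \<le> 2 ^ (k - 1)"
      using k(1) kle by blast
    ultimately show "k \<in> {1..m}" using k by auto
  qed
  thus ?thesis using finite_subset by blast
qed

lemma rank_S: "rank m = card (S m)"
  unfolding rank_def S_def[symmetric] using bdigit_one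
  by (simp add: S_def)

lemma negl_S: "negl m = (\<Sum>k\<in>S m. k + 1)"
  unfolding negl_def S_def[symmetric]
proof (rule sum.cong)
  fix x assume "x \<in> S m"
  hence "bdigit m x = 1" using bdigit_one by (auto simp: S_def)
  thus "(x + 1) * bdigit m x = x + 1" by simp
qed simp

lemma bdigit_1: "bdigit (2*q+b) 1 = b mod 2"
  by (simp add: bdigit_def)

lemma bdigit_Suc: "k \<ge> 1 \<Longrightarrow> bdigit (2*q+b) (Suc k) = bdigit (q + b div 2) k"
proof -
  assume "k \<ge> 1"
  then obtain j where j: "k = Suc j" by (cases k) auto
  have "(2*q+b) div 2 ^ k = ((2*q+b) div 2) div 2^j" by (simp add: j div_mult2_eq)
  thus ?thesis by (simp add: bdigit_def j)
qed

lemma S_rec: "b < 2 \<Longrightarrow> S (2*q+b) = (if b = 1 then {1} else {}) \<union> Suc ` S q"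
proof -
  assume b: "b < 2"
  show ?thesis
  proof (rule set_eqI)
    fix k
    show "k \<in> S (2*q+b) \<longleftrightarrow> k \<in> (if b = 1 then {1} else {}) \<union> Suc ` S q"
    proof (cases k)
      case 0 thus ?thesis by (auto simp: S_def)
    next
      case (Suc j)
      show ?thesis
      proof (cases j)
        case 0 thus ?thesis using Suc b bdigit_1[of q b] by (auto simp: S_def)
      next
        case (Suc i)
        hence "bdigit (2*q+b) k = bdigit q j" using \<open>k = Suc j\<close> b bdigit_Suc[of j q b] by simp
        thus ?thesis using Suc \<open>k = Suc j\<close> by (auto simp: S_def)
      qed
    qed
  qed
qed

lemma one_notin: "1 \<notin> Suc ` S q" by (auto simp: S_def)

lemma rank_rec: "b < 2 \<Longrightarrow> rank (2*q+b) = b + rank q"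
  unfolding rank_S using S_rec[of b q] one_notin[of q] S_fin[of q]
  by (auto simp: card_image card_insert_if)

lemma negl_rec: "b < 2 \<Longrightarrow> negl (2*q+b) = 2*b + negl q + rank q"
proof -
  assume b: "b < 2"
  have "(\<Sum>k\<in>Suc ` S q. k + 1) = (\<Sum>k\<in>S q. Suc k + 1)"
    by (simp add: sum.reindex)
  also have "\<dots> = (\<Sum>k\<in>S q. (k + 1) + 1)" by simp
  also have "\<dots> = (\<Sum>k\<in>S q. k + 1) + card (S q)"
    by (simp only: sum.distrib) simp
  finally have "(\<Sum>k\<in>Suc ` S q. k + 1) = (\<Sum>k\<in>S q. k + 1) + card (S q)" .
  moreover have "card (Suc ` S q) = card (S q)" by (simp add: card_image)
  ultimately
  show ?thesis unfolding negl_S rank_S using S_rec[OF b, of q] one_notin[of q] S_fin[of q] b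
    by (cases "b = 1") (auto simp: sum.insert_if card_image)
qed


lemma r2: "rank (2*q) = rank q" using rank_rec[of 0 q] by simp
lemma r2s: "rank (2*q+1) = 1 + rank q" using rank_rec[of 1 q] by simp
lemma p2: "negl (2*q) = negl q + rank q" using negl_rec[of 0 q] by simp
lemma p2s: "negl (2*q+1) = 2 + negl q + rank q" using negl_rec[of 1 q] by simp

lemma rank_succ: "rank (Suc m) \<le> rank m + 1"
proof (induction m rule: less_induct)
  case (less m)
  obtain a b where m: "m = 2*a+b" "b < 2" by (metis div_mult_mod_eq mod_less_divisor zero_less_numeral mult.commute)
  show ?case
  proof (cases "b = 0")
    case True thus ?thesis using m r2[of a] r2s[of a] by simp
  next
    case False
    hence b: "b = 1" using m by simp
    have "Suc m = 2*(Suc a)" using m b by simp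
    moreover have "a < m" using m b by simp
    ultimately show ?thesis using less[of a] m b r2[of "Suc a"] r2s[of a] by simp
  qed
qed

lemma g_succ: "negl (Suc m) + c * rank (Suc m) \<le> negl m + c * rank m + c + 2"
proof (induction m arbitrary: c rule: less_induct)
  case (less m)
  obtain a b where m: "m = 2*a+b" "b < 2" by (metis div_mult_mod_eq mod_less_divisor zero_less_numeral mult.commute)
  show ?case
  proof (cases "b = 0")
    case True
    hence "Suc m = 2*a+1" using m by simp
    thus ?thesis using m True r2[of a] r2s[of a] p2[of a] p2s[of a] by (simp add: algebra_simps)
  next
    case False
    hence b: "b = 1" using m by simp
    have sm: "Suc m = 2*(Suc a)" using m b by simp
    have "a < m" using m b by simp
    from less[OF this, of "Suc c"]
    show ?thesis unfolding sm using m b r2[of "Suc a"] p2[of "Suc a"] r2s[of a] p2s[of a]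
      by (simp add: algebra_simps)
  qed
qed

theorem theorem2:
  fixes k :: nat
  assumes "k \<ge> 1"
  shows "local_min (\<lambda>m. real (negl m)) k \<longleftrightarrow> local_min (\<lambda>m. real (rank m)) k"
proof -
  obtain q c where k: "k = 4*q + c" "c < 4" by (metis div_mult_mod_eq mod_less_divisor zero_less_numeral mult.commute)
  have R1: "\<And>x. rank (4*x) = rank x" using r2 by (metis mult.assoc numeral_Bit0 mult_2 one_add_one numeral_One)
  have R: "\<And>x. rank (4*x) = rank x" "\<And>x. rank (4*x+1) = 1 + rank x"
     "\<And>x. rank (4*x+2) = 1 + rank x" "\<And>x. rank (4*x+3) = 2 + rank x"
  proof -
    fix x
    have a: "4*x = 2*(2*x::nat)" "4*x+1 = 2*(2*x)+1" "4*x+2 = 2*(2*x+1)" "4*x+3 = 2*(2*x+1)+1" by simp_all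
    show "rank (4*x) = rank x" "rank (4*x+1) = 1 + rank x"
     "rank (4*x+2) = 1 + rank x" "rank (4*x+3) = 2 + rank x"
      apply (simp only: a(1) r2)
      apply (simp only: a(2) r2s r2)
      apply (simp only: a(3) r2s r2)
      apply (simp only: a(4) r2s r2)
      done
  qed
  have P: "\<And>x. negl (4*x) = negl x + 2*rank x" "\<And>x. negl (4*x+1) = 2 + negl x + 2*rank x"
     "\<And>x. negl (4*x+2) = 3 + negl x + 2*rank x" "\<And>x. negl (4*x+3) = 5 + negl x + 2*rank x"
  proof -
    fix x
    have a: "4*x = 2*(2*x::nat)" "4*x+1 = 2*(2*x)+1" "4*x+2 = 2*(2*x+1)" "4*x+3 = 2*(2*x+1)+1" by simp_all
    show "negl (4*x) = negl x + 2*rank x" "negl (4*x+1) = 2 + negl x + 2*rank x"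
     "negl (4*x+2) = 3 + negl x + 2*rank x" "negl (4*x+3) = 5 + negl x + 2*rank x"
      apply (simp only: a(1) r2 p2)
      apply (simp only: a(2) r2s r2 p2s p2)
      apply (simp only: a(3) r2s r2 p2s p2)
      apply (simp only: a(4) r2s r2 p2s p2)
      done
  qed
  consider "c = 0" | "c = 1" | "c = 2" | "c = 3" using k by linarith
  thus ?thesis
  proof cases
    case 1
    then obtain j where q: "q = Suc j" using k assms by (cases q) auto
    have e1: "k - 1 = 4*j+3" "k + 1 = 4*q+1" "k = 4*q" using k 1 q by simp_all
    have "rank q \<le> rank j + 1" using rank_succ[of j] q by simp
    moreover have "negl q + 2 * rank q \<le> negl j + 2*rank j + 4" using g_succ[of j 2] q by simp
    ultimately show ?thesis unfolding local_min_def
      apply (simp only: e1(1) e1(2))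
      apply (simp only: e1(3) R P)
      using assms q by simp
  next
    case 2
    have "k - 1 = 4*q" "k = 4*q+1" using k 2 by simp_all
    hence A: "rank (k-1) = rank q" "rank k = 1 + rank q" "negl (k-1) = negl q + 2*rank q"
      "negl k = 2 + negl q + 2*rank q" using R P by simp_all
    show ?thesis unfolding local_min_def A by simp
  next
    case 3
    have "k - 1 = 4*q+1" "k = 4*q+2" using k 3 by simp_all
    hence A: "rank (k-1) = 1 + rank q" "rank k = 1 + rank q" "negl (k-1) = 2 + negl q + 2*rank q"
      "negl k = 3 + negl q + 2*rank q" using R P by simp_all
    show ?thesis unfolding local_min_def A by simp
  next
    case 4
    have "k - 1 = 4*q+2" "k = 4*q+3" using k 4 by simp_all
    hence A: "rank (k-1) = 1 + rank q" "rank k = 2 + rank q" "negl (k-1) = 3 + negl q + 2*rank q"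
      "negl k = 5 + negl q + 2*rank q" using R P by simp_all
    show ?thesis unfolding local_min_def A by simp
  qed
qed

end
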